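(* Consider natural gradient descent with the layer-wise metric $G_{\mathrm{layer},t}$ built from a constant symmetric positive definite $\Sigma\in\mathbb{R}^{L\times L}$, and let $\alpha=1_L^\top\Sigma^{-1}1_L$. If the learning rate is $\eta=c/\alpha$ with $0<c<2$, then the asymptotic (infinite-width) training dynamics converge to the global minimum: on the training inputs they are $f_t(x)=y+(1-c)^t(f_0(x)-y)$, which tends to $y$ as $t\to\infty$. In particular, for $c=1$ the dynamics reach $f_t(x)=y$ after one iteration.
   Context: Network: for $l=1,\dots,L$, $u_l=\frac{\sigma_w}{\sqrt{M_{l-1}}}W_lh_{l-1}+\sigma_b b_l$, $h_l=\phi(u_l)$, $h_0=x\in\mathbb{R}^{M_0}$; hidden widths $M_l=\alpha_lM$ ($l<L$), $M_L=C$; output $f_\theta=u_L$; $\theta_l$ = parameters of layer $l$; i.i.d. $\mathcal{N}(0,1)$ initialization of all weights and biases; $\phi$ locally Lipschitz, non-polynomial, with $\phi'$ locally Lipschitz; training inputs with $\|x_n\|_2=1$, pairwise distinct; MSE loss $\mathcal{L}(\theta)=\frac1{2N}\sum_n\|y_n-f_\theta(x_n)\|^2$. $f_t(x),y\in\mathbb{R}^{CN}$ are the concatenations over training samples. NGD: $\theta_{t+1}=\theta_t-\eta G_t^{-1}\nabla_\theta\mathcal{L}(\theta_t)$ in the zero-damping limit $\rho\to0^+$, with $G_{\mathrm{layer},t}=\frac1N S_t^\top(\Sigma\otimes I_{CN})S_t+\rho I$, $S_t$ block diagonal with blocks $\nabla_{\theta_l}f_t(x)$, $l=1,\dots,L$.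 The "asymptotic dynamics" are those to which the NGD outputs $f_t$ are uniformly-in-$t$ close with high probability as the width $M\to\infty$, namely $f_t(x')=\bar\Theta(x',x)\bar\Theta^{-1}(I-(I-\eta\bar\Theta)^t)(y-f_0(x))+f_0(x')$ with $\bar\Theta(x',x)=J_0(x')G_0^{-1}J_0(x)^\top/N$, $J_0=\nabla_\theta f_0$, $\bar\Theta=\bar\Theta(x,x)=\alpha I$. *)

theory Defs
  imports "HOL-Analysis.Analysis"
begin

fun matpow :: "real^'n^'n \<Rightarrow> nat \<Rightarrow> real^'n^'n" where
  "matpow A 0 = mat 1"
| "matpow A (Suc k) = A ** matpow A k"

definition spd :: "real^'n^'n \<Rightarrow> bool" where
  "spd S \<longleftrightarrow> transpose S = S \<and> (\<forall>v. v \<noteq> 0 \<longrightarrow> v \<bullet> (S *v v) > 0)"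

definition ones :: "real^'n" where
  "ones = (\<chi> i. 1)"

definition asym_dyn :: "real^'m^'m \<Rightarrow> real \<Rightarrow> real^'m \<Rightarrow> real^'m \<Rightarrow> nat \<Rightarrow> real^'m" where
  "asym_dyn Th eta y f0 t =
     (Th ** matrix_inv Th) *v ((mat 1 - matpow (mat 1 - eta *\<^sub>R Th) t) *v (y - f0)) + f0"

end

theory Submission
  imports Defs
begin

lemma minv:
  fixes A :: "real^'n^'n"
  assumes "invertible A"
  shows "A ** matrix_inv A = mat 1 \<and> matrix_inv A ** A = mat 1"
  using assms unfolding invertible_def matrix_inv_def by (rule someI_ex)

lemma spd_inj:
  fixes S :: "real^'n^'n"
  assumes "spd S" shows "inj ((*v) S)"
proof -
  have "\<forall>v. S *v v = 0 \<longrightarrow> v = 0"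
    using assms unfolding spd_def by (metis inner_zero_right less_irrefl)
  then show ?thesis
    by (metis (no_types, lifting) injI matrix_vector_mult_diff_distrib right_minus_eq)
qed

lemma alpha_pos:
  fixes S :: "real^'n^'n"
  assumes "spd S" shows "ones \<bullet> (matrix_inv S *v ones) > 0"
proof -
  have inv: "invertible S"
    using spd_inj[OF assms] by (simp add: invertible_left_inverse matrix_left_invertible_injective)
  define w where "w = matrix_inv S *v ones"
  have Sw: "S *v w = ones"
    unfolding w_def using inv
    using minv[OF inv] by (simp add: matrix_vector_mul_assoc)
  have "ones \<noteq> (0::real^'n)"
    by (metis ones_def vec_lambda_beta zero_index zero_neq_one)
  then have "w \<noteq> 0" using Sw by auto
  then have "w \<bullet> (S *v w) > 0" using assms unfolding spd_def by blast
  then show ?thesis using Sw w_def by (simp add: inner_commute)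
qed

lemma smat_vec: "((a::real) *\<^sub>R (mat 1 :: real^'n^'n)) *v x = a *\<^sub>R x"
  by (simp add: vec_eq_iff matrix_vector_mult_def mat_def if_distrib if_distribR sum.delta cong: if_cong)

lemma matpow_scal: "matpow (a *\<^sub>R (mat 1 :: real^'n^'n)) t = (a ^ t) *\<^sub>R mat 1"
  by (induction t) (auto simp: matrix_scalar_ac simp flip: scalar_matrix_assoc)

theorem corollary4p2:
  fixes Sigma :: "real^'L^'L" and Theta :: "real^'CN^'CN"
    and y f0 :: "real^'CN" and f :: "nat \<Rightarrow> real^'CN"
    and alpha eta c :: real
  assumes "spd Sigma"
    and "alpha = ones \<bullet> (matrix_inv Sigma *v ones)"
    and "Theta = alpha *\<^sub>R mat 1"
    and "eta = c / alpha"
    and "0 < c" and "c < 2"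
    and "\<And>t. f t = asym_dyn Theta eta y f0 t"
  shows "(\<forall>t. f t = y + (1 - c) ^ t *\<^sub>R (f0 - y))
       \<and> f \<longlonglongrightarrow> y
       \<and> (c = 1 \<longrightarrow> f 1 = y)"
proof -
  have ap: "alpha > 0" using alpha_pos[OF assms(1)] assms(2) by simp
  have inv: "Theta ** matrix_inv Theta = mat 1"
  proof -
    have "Theta ** ((1/alpha) *\<^sub>R mat 1) = mat 1" "((1/alpha) *\<^sub>R mat 1) ** Theta = mat 1"
      using ap assms(3) by (simp_all add: matrix_scalar_ac flip: scalar_matrix_assoc)
    then have "invertible Theta" unfolding invertible_def by blast
    then show ?thesis using minv by blast
  qed
  have M: "mat 1 - eta *\<^sub>R Theta = (1 - c) *\<^sub>R (mat 1 :: real^'CN^'CN)"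
    using ap assms(3,4) by (simp add: algebra_simps)
  have ft: "f t = y + (1 - c) ^ t *\<^sub>R (f0 - y)" for t
  proof -
    have "f t = (mat 1 - (1 - c) ^ t *\<^sub>R mat 1) *v (y - f0) + f0"
      using assms(7)[of t] unfolding asym_dyn_def inv M matpow_scal by simp
    also have "\<dots> = y + (1 - c) ^ t *\<^sub>R (f0 - y)"
      by (simp add: matrix_vector_mult_diff_rdistrib smat_vec algebra_simps)
    finally show ?thesis .
  qed
  have lim: "f \<longlonglongrightarrow> y"
  proof -
    have "abs (1 - c) < 1" using assms(5,6) by auto
    then have "(\<lambda>t. (1 - c) ^ t) \<longlonglongrightarrow> 0" by (simp add: LIMSEQ_abs_realpow_zero2) 
    then have "(\<lambda>t. y + (1 - c) ^ t *\<^sub>R (f0 - y)) \<longlonglongrightarrow> y + 0 *\<^sub>R (f0 - y)"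
      by (intro tendsto_add tendsto_const tendsto_scaleR)
    moreover have "f = (\<lambda>t. y + (1 - c) ^ t *\<^sub>R (f0 - y))" using ft by blast
    ultimately show ?thesis by simp
  qed
  show ?thesis using ft lim by simp
qed

end
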